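(* Let $\phi:[0,1]\to[0,1]$ be concave with $\phi(0)=0$, $\phi(1)=1$ and continuous at $0$. Then for every measurable $X$, \[ \|X\|_{TM_\phi}=\sup_{0<t<1}\left\{\frac{1-\phi(1-t)}{t}\,\mathbb{E}[|X|]+\left(1-\frac{1-\phi(1-t)}{t}\right)\operatorname{CVar}_t(|X|)\right\}=\sup_{0<t<1}\operatorname{RIM}_{t,\beta(t)}(|X|), \] where $\beta(t)=\frac{1-\phi(1-t)}{t}$ and $\operatorname{RIM}_{\alpha,\beta}(Z)=\beta\,\mathbb{E}[Z]+(1-\beta)\operatorname{CVar}_\alpha(Z)$.
   Context: $\Omega=[0,1]$ with Lebesgue measure $\mu$; $X^*(\omega)=\inf\{\lambda\ge0:\mu\{|X|>\lambda\}\le\omega\}$; $\mathbb{E}[|X|]=\int_0^1X^*\,d\omega$; for $Z\ge0$, $\operatorname{CVar}_\alpha(Z)=\frac{1}{1-\alpha}\int_0^{1-\alpha}Z^*(\omega)\,d\omega$. The positive translation equivariant Marcinkiewicz norm is $\|X\|_{TM_\phi}=\sup_{0<t<1}\{\frac{\phi(t)}{t}\int_0^tX^*\,d\omega+\frac{\phi(t)-1}{t-1}\int_t^1X^*\,d\omega\}$. *)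

theory Defs
  imports "HOL-Analysis.Analysis"
begin

text \<open>Omega = [0,1] with Lebesgue measure. Random variables are real functions,
  only their values on [0,1] matter. All quantities below are nonnegative and
  may be infinite, so they are valued in ennreal.\<close>

text \<open>Decreasing rearrangement X*(w) = inf{lambda >= 0 : mu{|X| > lambda} <= w}
  (inf of the empty set is infinity).\<close>
definition rearr :: "(real \<Rightarrow> real) \<Rightarrow> real \<Rightarrow> ennreal" where
  "rearr X w = Inf {ennreal l | l. l \<ge> 0 \<and>
      emeasure lebesgue {x \<in> {0..1}. l < \<bar>X x\<bar>} \<le> ennreal w}"

definition expect_abs :: "(real \<Rightarrow> real) \<Rightarrow> ennreal" where
  "expect_abs X = (\<integral>\<^sup>+ w. rearr X w * indicator {0..1} w \<partial>lborel)"

definition CVar :: "real \<Rightarrow> (real \<Rightarrow> real) \<Rightarrow> ennreal" where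
  "CVar \<alpha> Z = ennreal (1 / (1 - \<alpha>)) *
      (\<integral>\<^sup>+ w. rearr Z w * indicator {0..1 - \<alpha>} w \<partial>lborel)"

definition RIM :: "real \<Rightarrow> real \<Rightarrow> (real \<Rightarrow> real) \<Rightarrow> ennreal" where
  "RIM \<alpha> \<beta> Z = ennreal \<beta> * expect_abs Z + ennreal (1 - \<beta>) * CVar \<alpha> Z"

definition TM_norm :: "(real \<Rightarrow> real) \<Rightarrow> (real \<Rightarrow> real) \<Rightarrow> ennreal" where
  "TM_norm \<phi> X = (SUP t\<in>{0<..<1}.
      ennreal (\<phi> t / t) * (\<integral>\<^sup>+ w. rearr X w * indicator {0..t} w \<partial>lborel)
    + ennreal ((\<phi> t - 1) / (t - 1)) * (\<integral>\<^sup>+ w. rearr X w * indicator {t..1} w \<partial>lborel))"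

end

theory Submission
  imports Defs
begin

lemma rearr_abs: "rearr (\<lambda>x. \<bar>X x\<bar>) = rearr X"
  by (rule ext) (simp add: rearr_def)

lemma alg3: "0 < (s::real) \<Longrightarrow> s < 1 \<Longrightarrow> p / s = (1 - p) / (1 - s) + (p - s) / (s * (1 - s))"
proof -
  assume s: "0 < s" "s < 1"
  have a: "(1 - p) / (1 - s) = ((1 - p) * s) / (s * (1 - s))" using s by simp
  have "(1 - p) / (1 - s) + (p - s) / (s * (1 - s)) = ((1 - p) * s + (p - s)) / (s * (1 - s))"
    unfolding a by (simp add: add_divide_distrib)
  also have "\<dots> = (p * (1 - s)) / (s * (1 - s))" by (simp add: algebra_simps)
  also have "\<dots> = p / s" using s by simp
  finally show ?thesis by simp
qed

lemma rearr_anti: "w \<le> w' \<Longrightarrow> rearr X w' \<le> rearr X w"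
  unfolding rearr_def
  apply (rule Inf_superset_mono) 
  apply clarify
  subgoal for _ l using order_trans ennreal_leI by blast
  done

lemma rearr_meas: "rearr X \<in> borel_measurable borel"
proof (rule borel_measurableI_greater)
  fix y
  have "is_interval {x. y < rearr X x}"
    unfolding is_interval_1
  proof (intro ballI allI impI, elim conjE)
    fix a b x assume "a \<in> {x. y < rearr X x}" "b \<in> {x. y < rearr X x}" "a \<le> x" "x \<le> b"
    then show "x \<in> {x. y < rearr X x}" using rearr_anti[of x b X] by auto
  qed
  then show "{x \<in> space borel. y < rearr X x} \<in> sets borel"
    using real_interval_borel_measurable by simp
qed

lemma split_int:
  assumes "0 < t" "t < 1"
  shows "(\<integral>\<^sup>+ w. rearr X w * indicator {0..1} w \<partial>lborel)
    = (\<integral>\<^sup>+ w. rearr X w * indicator {0..t} w \<partial>lborel)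
      + (\<integral>\<^sup>+ w. rearr X w * indicator {t..1} w \<partial>lborel)"
proof -
  have "(\<integral>\<^sup>+ w. rearr X w * indicator {t..1} w \<partial>lborel)
      = (\<integral>\<^sup>+ w. rearr X w * indicator {t<..1} w \<partial>lborel)"
    by (intro nn_integral_cong_AE eventually_mono[OF AE_lborel_singleton[of t]])
       (auto simp: indicator_def)
  moreover have "(\<integral>\<^sup>+ w. rearr X w * indicator {0..1} w \<partial>lborel)
      = (\<integral>\<^sup>+ w. rearr X w * indicator {0..t} w + rearr X w * indicator {t<..1} w \<partial>lborel)"
    using assms by (intro nn_integral_cong) (auto simp: indicator_def)
  moreover have "\<dots> = (\<integral>\<^sup>+ w. rearr X w * indicator {0..t} w \<partial>lborel)
      + (\<integral>\<^sup>+ w. rearr X w * indicator {t<..1} w \<partial>lborel)"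
    using rearr_meas[of X] by (intro nn_integral_add) auto
  ultimately show ?thesis by simp
qed

theorem theorem22:
  fixes \<phi> :: "real \<Rightarrow> real" and X :: "real \<Rightarrow> real"
  assumes "\<forall>x\<in>{0..1}. \<phi> x \<in> {0..1}"
    and "concave_on {0..1} \<phi>"
    and "\<phi> 0 = 0" and "\<phi> 1 = 1"
    and "continuous (at 0 within {0..1}) \<phi>"
    and "X \<in> borel_measurable lebesgue"
  shows "TM_norm \<phi> X = (SUP t\<in>{0<..<1}.
            ennreal ((1 - \<phi> (1 - t)) / t) * expect_abs X
          + ennreal (1 - (1 - \<phi> (1 - t)) / t) * CVar t (\<lambda>x. \<bar>X x\<bar>))
       \<and> TM_norm \<phi> X = (SUP t\<in>{0<..<1}. RIM t ((1 - \<phi> (1 - t)) / t) (\<lambda>x. \<bar>X x\<bar>))"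
proof -
  define g where "g t = ennreal ((1 - \<phi> (1 - t)) / t) * expect_abs X
          + ennreal (1 - (1 - \<phi> (1 - t)) / t) * CVar t (\<lambda>x. \<bar>X x\<bar>)" for t
  have eA: "expect_abs (\<lambda>x. \<bar>X x\<bar>) = expect_abs X"
    by (simp add: expect_abs_def rearr_abs)
  have R: "RIM t ((1 - \<phi> (1 - t)) / t) (\<lambda>x. \<bar>X x\<bar>) = g t" for t
    by (simp add: RIM_def g_def eA)
  have img: "(\<lambda>t. 1 - t) ` {0<..<1::real} = {0<..<1}"
    by (auto simp: image_iff intro!: bexI[where x="1 - _"])
  have pt: "g (1 - s) = ennreal (\<phi> s / s) * (\<integral>\<^sup>+ w. rearr X w * indicator {0..s} w \<partial>lborel)
    + ennreal ((\<phi> s - 1) / (s - 1)) * (\<integral>\<^sup>+ w. rearr X w * indicator {s..1} w \<partial>lborel)"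
    if s: "0 < s" "s < 1" for s
  proof -
    define A where "A = (\<integral>\<^sup>+ w. rearr X w * indicator {0..s} w \<partial>lborel)"
    define B where "B = (\<integral>\<^sup>+ w. rearr X w * indicator {s..1} w \<partial>lborel)"
    define \<beta> where "\<beta> = (1 - \<phi> s) / (1 - s)"
    define c where "c = (\<phi> s - s) / (s * (1 - s))"
    have ps: "\<phi> s \<le> 1" using assms(1) s by auto
    have ge: "s \<le> \<phi> s"
      using concave_onD[OF assms(2), of s 0 1] s assms(3,4) by simp
    have b0: "0 \<le> \<beta>" using ps s by (simp add: \<beta>_def)
    have c0: "0 \<le> c" using ge s by (simp add: c_def)
    have E: "expect_abs X = A + B" unfolding expect_abs_def A_def B_def using split_int s by simp
    have C: "CVar (1 - s) (\<lambda>x. \<bar>X x\<bar>) = ennreal (1 / s) * A"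
      by (simp add: CVar_def rearr_abs A_def)
    have e1: "(1 - \<phi> (1 - (1 - s))) / (1 - s) = \<beta>" by (simp add: \<beta>_def)
    have e2: "(1 - \<beta>) * (1 / s) = c"
      using s by (simp add: \<beta>_def c_def field_simps)
    have e3: "\<phi> s / s = \<beta> + c"
      using alg3[OF s] by (simp add: \<beta>_def c_def)
    have e4: "(\<phi> s - 1) / (s - 1) = \<beta>"
      using s by (simp add: \<beta>_def field_simps)
    have b1: "\<beta> \<le> 1" using ge s by (simp add: \<beta>_def pos_divide_le_eq)
    have gs: "g (1 - s) = ennreal \<beta> * (A + B) + ennreal (1 - \<beta>) * (ennreal (1 / s) * A)"
      using s unfolding g_def e1 E C by simp
    have m: "ennreal (1 - \<beta>) * (ennreal (1 / s) * A) = ennreal c * A"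
      using b1 s e2 by (simp add: mult.assoc[symmetric] ennreal_mult'[symmetric])
    have "g (1 - s) = ennreal \<beta> * (A + B) + ennreal c * A" using gs m by simp
    also have "\<dots> = (ennreal \<beta> + ennreal c) * A + ennreal \<beta> * B"
      by (simp add: distrib_left distrib_right add_ac)
    also have "\<dots> = ennreal (\<beta> + c) * A + ennreal \<beta> * B"
      using b0 c0 by (simp add: ennreal_plus)
    finally show ?thesis using e3 e4 by (simp add: A_def B_def)
  qed
  have "TM_norm \<phi> X = (SUP s\<in>{0<..<1}. g (1 - s))"
    unfolding TM_norm_def by (intro SUP_cong) (auto simp: pt)
  also have "\<dots> = (SUP t\<in>(\<lambda>t. 1 - t) ` {0<..<1}. g t)"
    by (simp add: image_comp)
  also have "\<dots> = (SUP t\<in>{0<..<1}. g t)" by (simp add: img)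
  finally have main: "TM_norm \<phi> X = (SUP t\<in>{0<..<1}. g t)" .
  show ?thesis using main by (simp add: R g_def)
qed

end
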